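(* Let $f\in C^1(\mathbb{R})$, let $u_L,u_R\in\mathbb{R}$ and $\varepsilon>0$. Assume that $f'$ is Lipschitz continuous on $[\min\{u_L,u_R\},\max\{u_L,u_R\}]$ if $u_L\neq u_R$ (no further assumption beyond $f\in C^1(\mathbb{R})$ if $u_L=u_R$). Then there exists a unique function $u\in C^2(\mathbb{R})$ satisfying \[ \varepsilon u''(\xi)=\big(f'(u(\xi))-\xi\big)u'(\xi)\quad\text{for all }\xi\in\mathbb{R},\qquad \lim_{\xi\to-\infty}u(\xi)=u_L,\quad \lim_{\xi\to+\infty}u(\xi)=u_R. \]
   Context: This boundary value problem describes self-similar solutions $U(x,t)=u(x/t)$ of the Dafermos regularization $U_t+f(U)_x=\varepsilon t U_{xx}$ of the scalar conservation law $U_t+f(U)_x=0$ with Riemann initial data ($U(x,0)=u_L$ for $x<0$, $U(x,0)=u_R$ for $x>0$). Solutions are understood in the classical sense, i.e. $u\in C^2(\mathbb{R})$. *)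

theory Defs
  imports "HOL-Analysis.Analysis"
begin

definition C1_real :: "(real \<Rightarrow> real) \<Rightarrow> bool" where
  "C1_real g \<longleftrightarrow> (\<forall>x. g differentiable (at x)) \<and> continuous_on UNIV (deriv g)"

definition C2_real :: "(real \<Rightarrow> real) \<Rightarrow> bool" where
  "C2_real g \<longleftrightarrow> (\<forall>x. g differentiable (at x)) \<and> (\<forall>x. deriv g differentiable (at x))
      \<and> continuous_on UNIV (deriv (deriv g))"

end

theory Submission
  imports Defs "HOL-Real_Asymp.Real_Asymp"
begin


definition prim :: "(real \<Rightarrow> real) \<Rightarrow> real \<Rightarrow> real" where
  "prim h x = integral {0..x} h - integral {x..0} h"

lemma prim_0[simp]: "prim h 0 = 0"
  by (simp add: prim_def)

lemma prim_eq:
  assumes h: "continuous_on UNIV h" and a: "a \<le> 0" "a \<le> y"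
  shows "prim h y = integral {a..y} h - integral {a..0} h"
proof (cases "0 \<le> y")
  case True
  have i: "h integrable_on {a..y}" using h by (intro integrable_continuous_real continuous_on_subset[OF h]) auto
  have "integral {a..0} h + integral {0..y} h = integral {a..y} h"
    using Henstock_Kurzweil_Integration.integral_combine[OF a(1) True i] .
  moreover have "integral {y..0} h = 0" using True
    by (cases "y = 0") auto
  ultimately show ?thesis unfolding prim_def by simp
next
  case False
  have i: "h integrable_on {a..0}" using h by (intro integrable_continuous_real continuous_on_subset[OF h]) auto
  have "integral {a..y} h + integral {y..0} h = integral {a..0} h"
    using Henstock_Kurzweil_Integration.integral_combine[OF a(2) _ i] False by simp
  moreover have "integral {0..y} h = 0" using False by simp
  ultimately show ?thesis unfolding prim_def by simp
qed

lemma prim_deriv: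
  assumes h: "continuous_on UNIV h"
  shows "(prim h has_real_derivative h x) (at x)"
proof -
  define a where "a = - \<bar>x\<bar> - 1"
  define b where "b = \<bar>x\<bar> + 1"
  have d1: "((\<lambda>y. integral {a..y} h) has_real_derivative h x) (at x within {a..b})"
    by (rule integral_has_real_derivative) (auto intro: continuous_on_subset[OF h] simp: a_def b_def)
  have d2: "((\<lambda>y. integral {a..y} h) has_real_derivative h x) (at x)"
    using d1 by (subst (asm) at_within_interior) (auto simp: a_def b_def)
  have d3: "((\<lambda>y. integral {a..y} h - integral {a..0} h) has_real_derivative h x) (at x)"
    using DERIV_diff[OF d2 DERIV_const, of "integral {a..0} h"] by simp
  show ?thesis
  proof (rule has_field_derivative_transform_within_open[OF d3, of "{a<..}"])
    show "open {a<..}" by simp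
    show "x \<in> {a<..}" by (auto simp: a_def)
    fix y assume "y \<in> {a<..}"
    then show "integral {a..y} h - integral {a..0} h = prim h y"
      using prim_eq[OF h, of a y] by (auto simp: a_def)
  qed
qed

lemma prim_cont: "continuous_on UNIV h \<Longrightarrow> continuous_on UNIV (prim h)"
  using prim_deriv by (meson DERIV_continuous continuous_at_imp_continuous_on)


lemma deriv_bound:
  fixes F F' Q q :: "real \<Rightarrow> real"
  assumes F: "\<And>t. (F has_real_derivative F' t) (at t)" and F0: "F 0 = 0"
    and Q: "\<And>t. t \<ge> 0 \<Longrightarrow> (Q has_real_derivative q t) (at t)" and Q0: "Q 0 = 0"
    and le: "\<And>t. \<bar>F' t\<bar> \<le> q \<bar>t\<bar>"
  shows "\<bar>F x\<bar> \<le> Q \<bar>x\<bar>"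
proof (cases "0 \<le> x")
  case True
  have "Q 0 - F 0 \<le> Q x - F x"
  proof (rule DERIV_nonneg_imp_nondecreasing[OF True])
    fix t assume "0 \<le> t" "t \<le> x"
    then show "\<exists>y. ((\<lambda>t. Q t - F t) has_real_derivative y) (at t) \<and> 0 \<le> y"
      using le[of t] by (intro exI[of _ "q t - F' t"]) (auto intro!: derivative_eq_intros Q F)
  qed
  moreover have "Q 0 + F 0 \<le> Q x + F x"
  proof (rule DERIV_nonneg_imp_nondecreasing[OF True])
    fix t assume "0 \<le> t" "t \<le> x"
    then show "\<exists>y. ((\<lambda>t. Q t + F t) has_real_derivative y) (at t) \<and> 0 \<le> y"
      using le[of t] by (intro exI[of _ "q t + F' t"]) (auto intro!: derivative_eq_intros Q F)
  qed
  ultimately show ?thesis using True F0 Q0 by auto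
next
  case False
  hence x0: "x \<le> 0" by simp
  have dQ: "((\<lambda>t. Q (- t)) has_real_derivative - q (- t)) (at t)" if "t \<le> 0" for t
  proof -
    have "((\<lambda>t. - t) has_real_derivative - 1) (at t)" by (auto intro!: derivative_eq_intros)
    from DERIV_chain2[OF Q[of "-t"] this] that show ?thesis by simp
  qed
  have "Q (- 0) - F 0 \<le> Q (- x) - F x"
  proof (rule DERIV_nonpos_imp_nonincreasing[OF x0])
    fix t assume "x \<le> t" "t \<le> 0"
    then show "\<exists>y. ((\<lambda>t. Q (- t) - F t) has_real_derivative y) (at t) \<and> y \<le> 0"
      using le[of t] dQ[of t] by (intro exI[of _ "- q (- t) - F' t"]) (auto intro!: derivative_eq_intros F)
  qed
  moreover have "Q (- 0) + F 0 \<le> Q (- x) + F x"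
  proof (rule DERIV_nonpos_imp_nonincreasing[OF x0])
    fix t assume "x \<le> t" "t \<le> 0"
    then show "\<exists>y. ((\<lambda>t. Q (- t) + F t) has_real_derivative y) (at t) \<and> y \<le> 0"
      using le[of t] dQ[of t] by (intro exI[of _ "- q (- t) + F' t"]) (auto intro!: derivative_eq_intros F)
  qed
  ultimately show ?thesis using x0 F0 Q0 by auto
qed

lemma exp_diff_bound:
  fixes x y :: real
  shows "\<bar>exp x - exp y\<bar> \<le> max (exp x) (exp y) * \<bar>x - y\<bar>"
proof -
  have a: "exp x - exp y \<le> exp x * (x - y)" if "y \<le> x" for x y :: real
  proof -
    have "1 + (y - x) \<le> exp (y - x)" by (rule exp_ge_add_one_self)
    hence "exp x * (1 + (y - x)) \<le> exp x * exp (y - x)" by simp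
    also have "\<dots> = exp y" by (simp add: exp_diff)
    finally show ?thesis by (simp add: algebra_simps)
  qed
  show ?thesis
  proof (cases "y \<le> x")
    case True
    then show ?thesis using a[OF True] by (simp add: abs_if max_def)
  next
    case False
    then show ?thesis using a[of x y] by (simp add: abs_if max_def)
  qed
qed

lemma mono_tendsto_Sup:
  fixes u :: "real \<Rightarrow> real"
  assumes m: "mono u" and b: "bdd_above (range u)"
  shows "(u \<longlongrightarrow> Sup (range u)) at_top"
proof (rule order_tendstoI)
  fix y assume "y < Sup (range u)"
  then obtain x0 where "y < u x0" using less_cSup_iff[of "range u" y] b by auto
  then show "\<forall>\<^sub>F x in at_top. y < u x"
    unfolding eventually_at_top_linorder by (intro exI[of _ x0]) (meson less_le_trans m monoD)
next
  fix y assume "Sup (range u) < y"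
  then show "\<forall>\<^sub>F x in at_top. u x < y"
    using cSUP_upper[OF _ b] by (intro always_eventually) (meson UNIV_I le_less_trans)
qed

lemma mono_tendsto_Inf:
  fixes u :: "real \<Rightarrow> real"
  assumes m: "mono u" and b: "bdd_below (range u)"
  shows "(u \<longlongrightarrow> Inf (range u)) at_bot"
proof (rule order_tendstoI)
  fix y assume "Inf (range u) < y"
  then obtain x0 where "u x0 < y" using cInf_less_iff[of "range u" y] b by auto
  then show "\<forall>\<^sub>F x in at_bot. u x < y"
    unfolding eventually_at_bot_linorder by (intro exI[of _ x0]) (meson le_less_trans m monoD)
next
  fix y assume "y < Inf (range u)"
  then show "\<forall>\<^sub>F x in at_bot. y < u x"
    using cINF_lower[OF b] by (intro always_eventually) (meson UNIV_I less_le_trans)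
qed


definition sol :: "(real \<Rightarrow> real) \<Rightarrow> real \<Rightarrow> real \<Rightarrow> real \<Rightarrow> (real \<Rightarrow> real) \<Rightarrow> bool" where
  "sol f \<epsilon> uL uR u \<longleftrightarrow> C2_real u
     \<and> (\<forall>\<xi>. \<epsilon> * deriv (deriv u) \<xi> = (deriv f (u \<xi>) - \<xi>) * deriv u \<xi>)
     \<and> (u \<longlongrightarrow> uL) at_bot \<and> (u \<longlongrightarrow> uR) at_top"

lemma sol_D:
  assumes "sol f \<epsilon> uL uR u"
  shows "\<And>x. (u has_real_derivative deriv u x) (at x)"
    and "\<And>x. (deriv u has_real_derivative deriv (deriv u) x) (at x)"
    and "\<And>x. \<epsilon> * deriv (deriv u) x = (deriv f (u x) - x) * deriv u x"
    and "(u \<longlongrightarrow> uL) at_bot" and "(u \<longlongrightarrow> uR) at_top"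
    and "continuous_on UNIV u"
  using assms unfolding sol_def C2_real_def
  by (auto simp: DERIV_deriv_iff_real_differentiable differentiable_imp_continuous_within continuous_at_imp_continuous_on)

lemma C1_D:
  assumes "C1_real f"
  shows "\<And>x. (f has_real_derivative deriv f x) (at x)" and "continuous_on UNIV (deriv f)"
    and "continuous_on UNIV f"
  using assms unfolding C1_real_def
  by (auto simp: DERIV_deriv_iff_real_differentiable differentiable_imp_continuous_within continuous_at_imp_continuous_on)

lemma bounded_lim:
  fixes u :: "real \<Rightarrow> real"
  assumes c: "continuous_on UNIV u" and l1: "(u \<longlongrightarrow> l1) at_bot" and l2: "(u \<longlongrightarrow> l2) at_top"
  shows "\<exists>R. \<forall>x. \<bar>u x\<bar> \<le> R"
proof -
  have "\<forall>\<^sub>F x in at_top. dist (u x) l2 < 1" using l2 by (rule tendstoD) simp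
  then obtain X1 where X1: "\<And>x. x \<ge> X1 \<Longrightarrow> \<bar>u x - l2\<bar> < 1"
    unfolding eventually_at_top_linorder dist_real_def by auto
  have "\<forall>\<^sub>F x in at_bot. dist (u x) l1 < 1" using l1 by (rule tendstoD) simp
  then obtain X2 where X2: "\<And>x. x \<le> X2 \<Longrightarrow> \<bar>u x - l1\<bar> < 1"
    unfolding eventually_at_bot_linorder dist_real_def by auto
  have "bounded (u ` {X2..X1})"
    by (intro compact_imp_bounded compact_continuous_image continuous_on_subset[OF c]) auto
  then obtain R0 where R0: "\<And>x. x \<in> {X2..X1} \<Longrightarrow> \<bar>u x\<bar> \<le> R0"
    unfolding bounded_iff by (auto simp del: atLeastAtMost_iff)
  show ?thesis
  proof (intro exI allI)
    fix x
    show "\<bar>u x\<bar> \<le> max R0 (max (\<bar>l1\<bar> + 1) (\<bar>l2\<bar> + 1))"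
    proof (cases "x \<le> X2")
      case True then show ?thesis using X2[of x] by auto
    next
      case False
      then show ?thesis using X1[of x] R0[of x] by (cases "x \<ge> X1") auto
    qed
  qed
qed

lemma mul_exp_le:
  fixes a b p q :: real
  assumes "a * exp p \<le> b" "q = - p"
  shows "a \<le> b * exp q"
proof -
  have "a * exp p * exp q \<le> b * exp q" using assms(1) by (intro mult_right_mono) auto
  moreover have "exp p * exp q = 1" using assms(2) by (simp add: exp_minus)
  ultimately show ?thesis by (simp add: mult.assoc)
qed

lemma sol_decay:
  assumes f: "C1_real f" and e: "\<epsilon> > 0" and s: "sol f \<epsilon> uL uR u"
  shows "(deriv u \<longlongrightarrow> 0) at_top" "(deriv u \<longlongrightarrow> 0) at_bot"
    "((\<lambda>x. x * (u x - uR)) \<longlongrightarrow> 0) at_top" "((\<lambda>x. x * (u x - uL)) \<longlongrightarrow> 0) at_bot"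
proof -
  note d1 = sol_D(1)[OF s] and d2 = sol_D(2)[OF s] and ode = sol_D(3)[OF s]
  note fD = C1_D[OF f]
  obtain R where R: "\<And>x. \<bar>u x\<bar> \<le> R" using bounded_lim[OF sol_D(6,4,5)[OF s]] by auto
  have "bounded (deriv f ` {-R..R})"
    by (intro compact_imp_bounded compact_continuous_image continuous_on_subset[OF fD(2)]) auto
  then obtain M0 where M0: "\<And>v. v \<in> {-R..R} \<Longrightarrow> \<bar>deriv f v\<bar> \<le> M0"
    unfolding bounded_iff by (auto simp del: atLeastAtMost_iff)
  define M where "M = max M0 0"
  have M: "\<And>x. \<bar>deriv f (u x)\<bar> \<le> M" using M0 R unfolding M_def
    by (metis abs_le_D1 abs_le_D2 atLeastAtMost_iff max.coboundedI1 minus_le_iff)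
  have M0': "M \<ge> 0" by (simp add: M_def)
  define c0 where "c0 = (M + \<epsilon>)^2 / (2 * \<epsilon>)"
  define C where "C = \<bar>deriv u 0\<bar> * exp c0"
  have C0: "C \<ge> 0" by (simp add: C_def)
  have key: "2 * deriv u t * deriv (deriv u) t * \<epsilon> = 2 * (deriv u t)^2 * (deriv f (u t) - t)" for t
  proof -
    have "2 * deriv u t * (\<epsilon> * deriv (deriv u) t) = 2 * deriv u t * ((deriv f (u t) - t) * deriv u t)"
      using ode[of t] by simp
    thus ?thesis by (simp add: power2_eq_square algebra_simps)
  qed
  have expo: "(2 * M * x - x^2) / \<epsilon> \<le> 2 * c0 - 2 * x" for x
  proof -
    have "0 \<le> (M + \<epsilon> - x)^2" by simp
    hence "2 * M * x - x^2 \<le> (M + \<epsilon>)^2 - 2 * \<epsilon> * x" by (simp add: power2_eq_square algebra_simps)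
    hence "(2 * M * x - x^2) / \<epsilon> \<le> ((M + \<epsilon>)^2 - 2 * \<epsilon> * x) / \<epsilon>"
      using e by (simp add: divide_right_mono)
    also have "\<dots> = 2 * c0 - 2 * x" using e unfolding c0_def by (simp add: field_simps)
    finally show ?thesis .
  qed
  have sq: "(C * exp (- x))^2 = (deriv u 0)^2 * exp (2 * c0 - 2 * x)" for x
  proof -
    have "exp (2 * c0 - 2 * x) = exp c0 * exp (- x) * (exp c0 * exp (- x))"
      by (simp add: exp_add[symmetric] exp_diff exp_minus field_simps mult_exp_exp)
    moreover have "\<bar>deriv u 0\<bar> * \<bar>deriv u 0\<bar> = deriv u 0 * deriv u 0" by (simp add: abs_mult_self_eq)
    ultimately show ?thesis unfolding C_def power2_eq_square by (simp add: algebra_simps)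
  qed
  have bound: "\<bar>deriv u x\<bar> \<le> C * exp (- \<bar>x\<bar>)" for x
  proof (cases "0 \<le> x")
    case True
    define Z where "Z t = (deriv u t)^2 * exp (- (2 * M * t - t^2) / \<epsilon>)" for t
    have "Z x \<le> Z 0"
    proof (rule DERIV_nonpos_imp_nonincreasing[OF True])
      fix t assume "0 \<le> t" "t \<le> x"
      let ?y = "exp (- (2 * M * t - t^2) / \<epsilon>) * (2 * deriv u t * deriv (deriv u) t - (deriv u t)^2 * (2 * M - 2 * t) / \<epsilon>)"
      have "(Z has_real_derivative ?y) (at t)" unfolding Z_def
        using e by (auto intro!: derivative_eq_intros d2 simp: field_simps power2_eq_square)
      moreover have "?y \<le> 0"
      proof -
        have "?y * \<epsilon> = exp (- (2 * M * t - t^2) / \<epsilon>) * (2 * (deriv u t)^2 * (deriv f (u t) - M))"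
          using key[of t] e by (simp add: field_simps)
        also have "\<dots> \<le> 0" using M[of t] by (intro mult_nonneg_nonpos) auto
        finally show ?thesis using e by (simp add: mult_le_0_iff)
      qed
      ultimately show "\<exists>y. (Z has_real_derivative y) (at t) \<and> y \<le> 0" by blast
    qed
    hence "(deriv u x)^2 * exp (- (2 * M * x - x^2) / \<epsilon>) \<le> (deriv u 0)^2" unfolding Z_def by simp
    hence "(deriv u x)^2 \<le> (deriv u 0)^2 * exp ((2 * M * x - x^2) / \<epsilon>)"
      by (rule mul_exp_le) (use e in \<open>simp add: field_simps\<close>)
    also have "\<dots> \<le> (deriv u 0)^2 * exp (2 * c0 - 2 * x)"
      using expo[of x] by (intro mult_left_mono) auto
    finally have "\<bar>deriv u x\<bar>^2 \<le> (C * exp (- \<bar>x\<bar>))^2" using sq[of x] True by simp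
    then show ?thesis by (rule power2_le_imp_le) (simp add: C0)
  next
    case False
    hence x0: "x \<le> 0" by simp
    define Z where "Z t = (deriv u t)^2 * exp ((2 * M * t + t^2) / \<epsilon>)" for t
    have "Z x \<le> Z 0"
    proof (rule DERIV_nonneg_imp_nondecreasing[OF x0])
      fix t assume "x \<le> t" "t \<le> 0"
      let ?y = "exp ((2 * M * t + t^2) / \<epsilon>) * (2 * deriv u t * deriv (deriv u) t + (deriv u t)^2 * (2 * M + 2 * t) / \<epsilon>)"
      have "(Z has_real_derivative ?y) (at t)" unfolding Z_def
        using e by (auto intro!: derivative_eq_intros d2 simp: field_simps power2_eq_square)
      moreover have "?y \<ge> 0"
      proof -
        have "?y * \<epsilon> = exp ((2 * M * t + t^2) / \<epsilon>) * (2 * (deriv u t)^2 * (deriv f (u t) + M))"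
          using key[of t] e by (simp add: field_simps)
        also have "\<dots> \<ge> 0" using M[of t] by (intro mult_nonneg_nonneg) auto
        finally show ?thesis using e by (simp add: zero_le_mult_iff)
      qed
      ultimately show "\<exists>y. (Z has_real_derivative y) (at t) \<and> y \<ge> 0" by blast
    qed
    hence "(deriv u x)^2 * exp ((2 * M * x + x^2) / \<epsilon>) \<le> (deriv u 0)^2" unfolding Z_def by simp
    hence "(deriv u x)^2 \<le> (deriv u 0)^2 * exp ((- 2 * M * x - x^2) / \<epsilon>)"
      by (rule mul_exp_le) (use e in \<open>simp add: field_simps\<close>)
    also have "\<dots> \<le> (deriv u 0)^2 * exp (2 * c0 - 2 * (-x))"
      using expo[of "-x"] by (intro mult_left_mono) auto
    finally have "\<bar>deriv u x\<bar>^2 \<le> (C * exp (- \<bar>x\<bar>))^2" using sq[of "-x"] x0 by simp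
    then show ?thesis by (rule power2_le_imp_le) (simp add: C0)
  qed
  show "(deriv u \<longlongrightarrow> 0) at_top"
    by (rule Lim_null_comparison[where g = "\<lambda>x. C * exp (- \<bar>x\<bar>)"])
       (use bound in simp, real_asymp)
  show "(deriv u \<longlongrightarrow> 0) at_bot"
    by (rule Lim_null_comparison[where g = "\<lambda>x. C * exp (- \<bar>x\<bar>)"])
       (use bound in simp, real_asymp)
  have tailR: "\<bar>u x - uR\<bar> \<le> C * exp (- x)" if x0: "0 \<le> x" for x
  proof -
    have A: "u t + C * exp (- t) \<le> u x + C * exp (- x)" if "x \<le> t" for t
    proof (rule DERIV_nonpos_imp_nonincreasing[OF that])
      fix s assume "x \<le> s" "s \<le> t"
      then show "\<exists>y. ((\<lambda>t. u t + C * exp (- t)) has_real_derivative y) (at s) \<and> y \<le> 0"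
        using bound[of s] x0
        by (intro exI[of _ "deriv u s - C * exp (- s)"]) (auto intro!: derivative_eq_intros d1)
    qed
    have B: "u x - C * exp (- x) \<le> u t - C * exp (- t)" if "x \<le> t" for t
    proof (rule DERIV_nonneg_imp_nondecreasing[OF that])
      fix s assume "x \<le> s" "s \<le> t"
      then show "\<exists>y. ((\<lambda>t. u t - C * exp (- t)) has_real_derivative y) (at s) \<and> y \<ge> 0"
        using bound[of s] x0
        by (intro exI[of _ "deriv u s + C * exp (- s)"]) (auto intro!: derivative_eq_intros d1)
    qed
    have l1: "((\<lambda>t. u t + C * exp (- t)) \<longlongrightarrow> uR + C * 0) at_top"
      by (intro tendsto_intros sol_D(5)[OF s]) real_asymp
    have l2: "((\<lambda>t. u t - C * exp (- t)) \<longlongrightarrow> uR - C * 0) at_top"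
      by (intro tendsto_intros sol_D(5)[OF s]) real_asymp
    have "uR \<le> u x + C * exp (- x)"
      using tendsto_upperbound[OF l1, of "u x + C * exp (- x)"] A
      by (auto simp: eventually_at_top_linorder)
    moreover have "u x - C * exp (- x) \<le> uR"
      using tendsto_lowerbound[OF l2, of "u x - C * exp (- x)"] B
      by (auto simp: eventually_at_top_linorder)
    ultimately show ?thesis by auto
  qed
  have tailL: "\<bar>u x - uL\<bar> \<le> C * exp x" if x0: "x \<le> 0" for x
  proof -
    have A: "u t + C * exp t \<le> u x + C * exp x" if "t \<le> x" for t
    proof (rule DERIV_nonneg_imp_nondecreasing[OF that])
      fix s assume "t \<le> s" "s \<le> x"
      then show "\<exists>y. ((\<lambda>t. u t + C * exp t) has_real_derivative y) (at s) \<and> y \<ge> 0"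
        using bound[of s] x0
        by (intro exI[of _ "deriv u s + C * exp s"]) (auto intro!: derivative_eq_intros d1)
    qed
    have B: "u x - C * exp x \<le> u t - C * exp t" if "t \<le> x" for t
    proof (rule DERIV_nonpos_imp_nonincreasing[OF that])
      fix s assume "t \<le> s" "s \<le> x"
      then show "\<exists>y. ((\<lambda>t. u t - C * exp t) has_real_derivative y) (at s) \<and> y \<le> 0"
        using bound[of s] x0
        by (intro exI[of _ "deriv u s - C * exp s"]) (auto intro!: derivative_eq_intros d1)
    qed
    have l1: "((\<lambda>t. u t + C * exp t) \<longlongrightarrow> uL + C * 0) at_bot"
      by (intro tendsto_intros sol_D(4)[OF s]) real_asymp
    have l2: "((\<lambda>t. u t - C * exp t) \<longlongrightarrow> uL - C * 0) at_bot"
      by (intro tendsto_intros sol_D(4)[OF s]) real_asymp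
    have "uL \<le> u x + C * exp x"
      using tendsto_upperbound[OF l1, of "u x + C * exp x"] A
      by (auto simp: eventually_at_bot_linorder)
    moreover have "u x - C * exp x \<le> uL"
      using tendsto_lowerbound[OF l2, of "u x - C * exp x"] B
      by (auto simp: eventually_at_bot_linorder)
    ultimately show ?thesis by auto
  qed
  show "((\<lambda>x. x * (u x - uR)) \<longlongrightarrow> 0) at_top"
  proof (rule Lim_null_comparison[where g = "\<lambda>x. C * (x * exp (- x))"])
    show "\<forall>\<^sub>F x in at_top. norm (x * (u x - uR)) \<le> C * (x * exp (- x))"
      unfolding eventually_at_top_linorder
      using tailR by (intro exI[of _ 0]) (auto simp: abs_mult mult_left_mono mult.left_commute)
    show "((\<lambda>x. C * (x * exp (- x))) \<longlongrightarrow> 0) at_top" by real_asymp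
  qed
  show "((\<lambda>x. x * (u x - uL)) \<longlongrightarrow> 0) at_bot"
  proof (rule Lim_null_comparison[where g = "\<lambda>x. C * (- x * exp x)"])
    show "\<forall>\<^sub>F x in at_bot. norm (x * (u x - uL)) \<le> C * (- x * exp x)"
      unfolding eventually_at_bot_linorder
    proof (intro exI[of _ 0] allI impI)
      fix x :: real assume "x \<le> 0"
      then have "(- x) * \<bar>u x - uL\<bar> \<le> (- x) * (C * exp x)" using tailL[of x] by (intro mult_left_mono) auto
      moreover have "norm (x * (u x - uL)) = (- x) * \<bar>u x - uL\<bar>" using \<open>x \<le> 0\<close> by (simp add: abs_mult)
      ultimately show "norm (x * (u x - uL)) \<le> C * (- x * exp x)" by (simp add: algebra_simps)
    qed
    show "((\<lambda>x. C * (- x * exp x)) \<longlongrightarrow> 0) at_bot" by real_asymp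
  qed
qed


lemma attains_max:
  fixes H :: "real \<Rightarrow> real"
  assumes c: "continuous_on UNIV H" and l1: "(H \<longlongrightarrow> 0) at_bot" and l2: "(H \<longlongrightarrow> 0) at_top"
    and x1: "H x1 > 0"
  shows "\<exists>x0. \<forall>y. H y \<le> H x0"
proof -
  have "\<forall>\<^sub>F x in at_top. dist (H x) 0 < H x1" using l2 x1 by (rule tendstoD)
  then obtain X1 where X1: "\<And>x. x \<ge> X1 \<Longrightarrow> \<bar>H x\<bar> < H x1"
    unfolding eventually_at_top_linorder dist_real_def by auto
  have "\<forall>\<^sub>F x in at_bot. dist (H x) 0 < H x1" using l1 x1 by (rule tendstoD)
  then obtain X2 where X2: "\<And>x. x \<le> X2 \<Longrightarrow> \<bar>H x\<bar> < H x1"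
    unfolding eventually_at_bot_linorder dist_real_def by auto
  define I where "I = {min X2 x1..max X1 x1}"
  have "\<exists>x\<in>I. \<forall>y\<in>I. H y \<le> H x"
    by (rule continuous_attains_sup) (auto simp: I_def intro: continuous_on_subset[OF c])
  then obtain x0 where x0: "x0 \<in> I" "\<And>y. y \<in> I \<Longrightarrow> H y \<le> H x0" by auto
  have "H x1 \<le> H x0" using x0(2)[of x1] by (auto simp: I_def)
  show ?thesis
  proof (intro exI allI)
    fix y
    show "H y \<le> H x0"
    proof (cases "y \<in> I")
      case True then show ?thesis using x0 by auto
    next
      case False
      then have "y < min X2 x1 \<or> y > max X1 x1" by (auto simp: I_def)
      then have "\<bar>H y\<bar> < H x1" using X1 X2 by force
      then show ?thesis using \<open>H x1 \<le> H x0\<close> by auto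
    qed
  qed
qed

lemma H_le:
  assumes f: "C1_real f" and e: "\<epsilon> > 0" and s1: "sol f \<epsilon> uL uR u1" and s2: "sol f \<epsilon> uL uR u2"
  shows "\<epsilon> * (deriv u1 x - deriv u2 x) + x * (u1 x - u2 x) - (f (u1 x) - f (u2 x)) \<le> 0"
proof (rule ccontr)
  define H where "H x = \<epsilon> * (deriv u1 x - deriv u2 x) + x * (u1 x - u2 x) - (f (u1 x) - f (u2 x))" for x
  define W where "W x = u1 x - u2 x" for x
  assume "\<not> ?thesis"
  hence x1: "H x > 0" by (simp add: H_def)
  note fD = C1_D[OF f]
  note a1 = sol_D[OF s1] and a2 = sol_D[OF s2]
  have fc: "isCont f y" for y using fD(1)[of y] DERIV_isCont by blast
  have dH: "(H has_real_derivative W t) (at t)" for t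
  proof -
    note c1 = DERIV_chain2[OF fD(1) a1(1)] and c2 = DERIV_chain2[OF fD(1) a2(1)]
    show ?thesis unfolding H_def
      by (rule derivative_eq_intros c1 c2 a1(1,2) a2(1,2) refl)+
        (use a1(3)[of t] a2(3)[of t] in \<open>simp add: W_def algebra_simps\<close>)
  qed
  have dW: "(W has_real_derivative deriv u1 t - deriv u2 t) (at t)" for t
    unfolding W_def by (intro derivative_intros a1(1) a2(1))
  have cH: "continuous_on UNIV H"
    using dH by (meson DERIV_continuous continuous_at_imp_continuous_on)
  note d1 = sol_decay[OF f e s1] and d2 = sol_decay[OF f e s2]
  have "((\<lambda>x. \<epsilon> * (deriv u1 x - deriv u2 x) + (x * (u1 x - uR) - x * (u2 x - uR)) - (f (u1 x) - f (u2 x)))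
      \<longlongrightarrow> \<epsilon> * (0 - 0) + (0 - 0) - (f uR - f uR)) at_top"
    by (intro tendsto_intros d1 d2 isCont_tendsto_compose[OF fc] a1(5) a2(5))
  hence lt: "(H \<longlongrightarrow> 0) at_top" unfolding H_def by (simp add: algebra_simps)
  have "((\<lambda>x. \<epsilon> * (deriv u1 x - deriv u2 x) + (x * (u1 x - uL) - x * (u2 x - uL)) - (f (u1 x) - f (u2 x)))
      \<longlongrightarrow> \<epsilon> * (0 - 0) + (0 - 0) - (f uL - f uL)) at_bot"
    by (intro tendsto_intros d1 d2 isCont_tendsto_compose[OF fc] a1(4) a2(4))
  hence lb: "(H \<longlongrightarrow> 0) at_bot" unfolding H_def by (simp add: algebra_simps)
  obtain x0 where x0: "\<And>y. H y \<le> H x0" using attains_max[OF cH lb lt x1] by auto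
  have "W x0 = 0" using DERIV_local_max[OF dH, of 1 x0] x0 by auto
  hence eq: "u1 x0 = u2 x0" by (simp add: W_def)
  have Hpos: "H x0 > 0" using x0[of x] x1 by auto
  have "\<epsilon> * (deriv u1 x0 - deriv u2 x0) = H x0" using eq by (simp add: H_def)
  hence "deriv u1 x0 - deriv u2 x0 > 0" using Hpos e by (metis zero_less_mult_pos)
  then obtain d where d: "d > 0" "\<And>h. h > 0 \<Longrightarrow> h < d \<Longrightarrow> W x0 < W (x0 + h)"
    using DERIV_pos_inc_right[OF dW] by blast
  obtain z where z: "x0 < z" "z < x0 + d / 2" "H (x0 + d / 2) - H x0 = (x0 + d / 2 - x0) * W z"
    using MVT2[of x0 "x0 + d/2" H W] dH d(1) by auto
  have "W z > 0" using d(2)[of "z - x0"] z \<open>W x0 = 0\<close> by auto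
  hence "(x0 + d / 2 - x0) * W z > 0" using d(1) by simp
  hence "H (x0 + d / 2) > H x0" using z(3) by linarith
  thus False using x0[of "x0 + d/2"] by simp
qed

lemma sol_unique:
  assumes f: "C1_real f" and e: "\<epsilon> > 0" and s1: "sol f \<epsilon> uL uR u1" and s2: "sol f \<epsilon> uL uR u2"
  shows "u1 = u2"
proof
  fix x
  define H where "H x = \<epsilon> * (deriv u1 x - deriv u2 x) + x * (u1 x - u2 x) - (f (u1 x) - f (u2 x))" for x
  have "H y \<le> 0" for y using H_le[OF f e s1 s2, of y] by (simp add: H_def)
  moreover have "- H y \<le> 0" for y using H_le[OF f e s2 s1, of y] by (simp add: H_def algebra_simps)
  ultimately have H0: "H y = 0" for y by (meson antisym neg_le_0_iff_le)
  note fD = C1_D[OF f]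
  note a1 = sol_D[OF s1] and a2 = sol_D[OF s2]
  note c1 = DERIV_chain2[OF fD(1) a1(1)] and c2 = DERIV_chain2[OF fD(1) a2(1)]
  have "(H has_real_derivative u1 x - u2 x) (at x)" unfolding H_def
      by (rule derivative_eq_intros c1 c2 a1(1,2) a2(1,2) refl)+
        (use a1(3)[of x] a2(3)[of x] in \<open>simp add: algebra_simps\<close>)
  moreover have "(H has_real_derivative 0) (at x)" using H0 by (simp add: H0[abs_def])
  ultimately have "u1 x - u2 x = 0" using DERIV_unique by metis
  thus "u1 x = u2 x" by simp
qed


locale dx =
  fixes g :: "real \<Rightarrow> real" and M K \<epsilon> B :: real
  assumes gc: "continuous_on UNIV g" and gM: "\<And>x. \<bar>g x\<bar> \<le> M"
    and gK: "\<And>x y. \<bar>g x - g y\<bar> \<le> K * \<bar>x - y\<bar>"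
    and K0: "K \<ge> 0" and e: "\<epsilon> > 0" and B0: "B > 0"
begin

lemma M0: "M \<ge> 0" using gM[of 0] by auto

definition Phi where "Phi u s = prim (\<lambda>t. g (u t)) s - s^2/2"
definition Hx where "Hx u s = exp (Phi u s / \<epsilon>)"
definition C0 where "C0 = exp ((M + \<epsilon>)^2 / (2*\<epsilon>))"
definition lam where "lam = 2 * B * C0 * K / \<epsilon> + 2"
definition Uf :: "(real \<Rightarrow>\<^sub>C real) \<Rightarrow> real \<Rightarrow> real" where
  "Uf w s = exp (lam * \<bar>s\<bar>) * apply_bcontfun w s"
definition Tf where "Tf \<alpha> \<beta> w x = exp (- lam * \<bar>x\<bar>) * (\<alpha> + \<beta> * prim (Hx (Uf w)) x)"
definition Tm where "Tm \<alpha> \<beta> w = Bcontfun (Tf \<alpha> \<beta> w)"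

lemma C0_pos: "C0 > 0" by (simp add: C0_def)
lemma C0_ge1: "C0 \<ge> 1" using e by (simp add: C0_def)
lemma lam_ge2: "lam \<ge> 2"
  unfolding lam_def using B0 C0_pos K0 e by (simp add: zero_le_divide_iff)

lemma gu_cont: "continuous_on UNIV u \<Longrightarrow> continuous_on UNIV (\<lambda>t. g (u t))"
  by (rule continuous_on_compose2[OF gc]) auto

lemma Phi_deriv:
  assumes "continuous_on UNIV u"
  shows "(Phi u has_real_derivative g (u s) - s) (at s)"
  unfolding Phi_def
  by (auto intro!: derivative_eq_intros prim_deriv[OF gu_cont[OF assms]])

lemma Hx_deriv:
  assumes "continuous_on UNIV u"
  shows "(Hx u has_real_derivative Hx u s * ((g (u s) - s) / \<epsilon>)) (at s)"
  unfolding Hx_def using e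
  by (auto intro!: derivative_eq_intros Phi_deriv[OF assms])

lemma Hx_cont: "continuous_on UNIV u \<Longrightarrow> continuous_on UNIV (Hx u)"
  using Hx_deriv by (meson DERIV_continuous continuous_at_imp_continuous_on)

lemma Hx_pos: "Hx u s > 0" by (simp add: Hx_def)

lemma prim_g_bound:
  assumes "continuous_on UNIV u"
  shows "\<bar>prim (\<lambda>t. g (u t)) s\<bar> \<le> M * \<bar>s\<bar>"
  by (rule deriv_bound[where F' = "\<lambda>t. g (u t)" and q = "\<lambda>t. M"])
     (auto intro!: prim_deriv gu_cont assms derivative_eq_intros gM)

lemma Hx_le:
  assumes "continuous_on UNIV u"
  shows "Hx u s \<le> C0 * exp (- \<bar>s\<bar>)"
proof -
  have "Phi u s \<le> M * \<bar>s\<bar> - s^2/2" using prim_g_bound[OF assms, of s] by (simp add: Phi_def)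
  also have "\<dots> \<le> (M + \<epsilon>)^2 / 2 - \<epsilon> * \<bar>s\<bar>"
  proof -
    have "0 \<le> (M + \<epsilon> - \<bar>s\<bar>)^2" by simp
    thus ?thesis by (simp add: power2_eq_square algebra_simps)
  qed
  finally have "Phi u s / \<epsilon> \<le> ((M + \<epsilon>)^2 / 2 - \<epsilon> * \<bar>s\<bar>) / \<epsilon>"
    using e by (simp add: divide_right_mono)
  also have "\<dots> = (M + \<epsilon>)^2 / (2*\<epsilon>) + - \<bar>s\<bar>" using e by (simp add: field_simps)
  finally show ?thesis unfolding Hx_def C0_def by (simp add: exp_add[symmetric])
qed

lemma Hx_ge:
  assumes "continuous_on UNIV u" "\<bar>s\<bar> \<le> 1"
  shows "Hx u s \<ge> exp (- (M + 1) / \<epsilon>)"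
proof -
  have "s^2 \<le> 1" using assms(2) abs_square_le_1 by blast
  have "M * \<bar>s\<bar> \<le> M" using assms(2) M0 by (simp add: mult_left_le)
  hence "- (M + 1) \<le> Phi u s" using prim_g_bound[OF assms(1), of s] \<open>s^2 \<le> 1\<close> by (simp add: Phi_def)
  hence "- (M + 1) / \<epsilon> \<le> Phi u s / \<epsilon>" using e by (simp add: divide_right_mono)
  thus ?thesis unfolding Hx_def by simp
qed

lemma prim_Hx_bound:
  assumes "continuous_on UNIV u"
  shows "\<bar>prim (Hx u) x\<bar> \<le> C0"
proof -
  have "\<bar>prim (Hx u) x\<bar> \<le> (\<lambda>t. C0 * (1 - exp (- t))) \<bar>x\<bar>"
  proof (rule deriv_bound[where F' = "Hx u" and q = "\<lambda>t. C0 * exp (- t)"])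
    show "(prim (Hx u) has_real_derivative Hx u t) (at t)" for t
      by (rule prim_deriv[OF Hx_cont[OF assms]])
    show "((\<lambda>t. C0 * (1 - exp (- t))) has_real_derivative C0 * exp (- t)) (at t)" for t
      by (auto intro!: derivative_eq_intros)
    show "\<bar>Hx u t\<bar> \<le> C0 * exp (- \<bar>t\<bar>)" for t
      using Hx_le[OF assms, of t] Hx_pos[of u t] by simp
  qed simp_all
  also have "\<dots> \<le> C0" using C0_pos by (simp add: mult_left_le)
  finally show ?thesis .
qed

lemma Uf_cont: "continuous_on UNIV (Uf w)"
  unfolding Uf_def by (intro continuous_intros) auto

lemma Tf_cont: "continuous_on UNIV (Tf \<alpha> \<beta> w)"
  unfolding Tf_def by (intro continuous_intros prim_cont Hx_cont Uf_cont)

lemma Tf_bound: "\<bar>Tf \<alpha> \<beta> w x\<bar> \<le> \<bar>\<alpha>\<bar> + \<bar>\<beta>\<bar> * C0"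
proof -
  have "\<bar>Tf \<alpha> \<beta> w x\<bar> = exp (- lam * \<bar>x\<bar>) * \<bar>\<alpha> + \<beta> * prim (Hx (Uf w)) x\<bar>"
    by (simp add: Tf_def abs_mult)
  also have "\<dots> \<le> 1 * \<bar>\<alpha> + \<beta> * prim (Hx (Uf w)) x\<bar>"
    using lam_ge2 by (intro mult_right_mono) auto
  also have "\<dots> \<le> \<bar>\<alpha>\<bar> + \<bar>\<beta>\<bar> * \<bar>prim (Hx (Uf w)) x\<bar>"
    by (simp add: abs_mult[symmetric] abs_triangle_ineq)
  also have "\<dots> \<le> \<bar>\<alpha>\<bar> + \<bar>\<beta>\<bar> * C0"
    using prim_Hx_bound[OF Uf_cont, of w x] by (simp add: mult_left_mono)
  finally show ?thesis .
qed

lemma Tf_in: "Tf \<alpha> \<beta> w \<in> bcontfun"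
  unfolding bcontfun_def using Tf_cont Tf_bound
  by (auto simp: bounded_iff intro!: exI[of _ "\<bar>\<alpha>\<bar> + \<bar>\<beta>\<bar> * C0"])

lemma Tm_apply: "apply_bcontfun (Tm \<alpha> \<beta> w) = Tf \<alpha> \<beta> w"
  unfolding Tm_def using Tf_in by (simp add: Bcontfun_inverse)

end


context dx begin

lemma Uf_diff: "\<bar>Uf w s - Uf v s\<bar> \<le> exp (lam * \<bar>s\<bar>) * dist w v"
proof -
  have "\<bar>Uf w s - Uf v s\<bar> = exp (lam * \<bar>s\<bar>) * dist (apply_bcontfun w s) (apply_bcontfun v s)"
    by (simp add: Uf_def dist_real_def abs_mult right_diff_distrib[symmetric])
  also have "\<dots> \<le> exp (lam * \<bar>s\<bar>) * dist w v" by (intro mult_left_mono dist_bounded) auto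
  finally show ?thesis .
qed

lemma prim_g_diff:
  "\<bar>prim (\<lambda>t. g (Uf w t)) s - prim (\<lambda>t. g (Uf v t)) s\<bar> \<le> K * dist w v * exp (lam * \<bar>s\<bar>) / lam"
proof -
  have lp: "lam > 0" using lam_ge2 by simp
  have "\<bar>prim (\<lambda>t. g (Uf w t)) s - prim (\<lambda>t. g (Uf v t)) s\<bar>
      \<le> (\<lambda>t. K * dist w v * (exp (lam * t) - 1) / lam) \<bar>s\<bar>"
  proof (rule deriv_bound[where F' = "\<lambda>t. g (Uf w t) - g (Uf v t)" and q = "\<lambda>t. K * dist w v * exp (lam * t)"])
    show "((\<lambda>s. prim (\<lambda>t. g (Uf w t)) s - prim (\<lambda>t. g (Uf v t)) s) has_real_derivative
        g (Uf w t) - g (Uf v t)) (at t)" for t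
      by (intro derivative_intros prim_deriv gu_cont Uf_cont)
    show "((\<lambda>t. K * dist w v * (exp (lam * t) - 1) / lam) has_real_derivative K * dist w v * exp (lam * t)) (at t)" for t
      using lp by (auto intro!: derivative_eq_intros)
    show "\<bar>g (Uf w t) - g (Uf v t)\<bar> \<le> K * dist w v * exp (lam * \<bar>t\<bar>)" for t
    proof -
      have "\<bar>g (Uf w t) - g (Uf v t)\<bar> \<le> K * \<bar>Uf w t - Uf v t\<bar>" by (rule gK)
      also have "\<dots> \<le> K * (exp (lam * \<bar>t\<bar>) * dist w v)" by (intro mult_left_mono Uf_diff K0)
      finally show ?thesis by (simp add: algebra_simps)
    qed
  qed simp_all
  also have "\<dots> \<le> K * dist w v * exp (lam * \<bar>s\<bar>) / lam"
    using lp K0 by (intro divide_right_mono mult_left_mono) auto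
  finally show ?thesis .
qed

lemma Hx_diff:
  "\<bar>Hx (Uf w) s - Hx (Uf v) s\<bar> \<le> C0 * K * dist w v / (\<epsilon> * lam) * exp ((lam - 1) * \<bar>s\<bar>)"
proof -
  have lp: "lam > 0" using lam_ge2 by simp
  have "\<bar>Hx (Uf w) s - Hx (Uf v) s\<bar> \<le> max (Hx (Uf w) s) (Hx (Uf v) s) * \<bar>Phi (Uf w) s / \<epsilon> - Phi (Uf v) s / \<epsilon>\<bar>"
    unfolding Hx_def by (rule exp_diff_bound)
  also have "\<dots> \<le> (C0 * exp (- \<bar>s\<bar>)) * (K * dist w v * exp (lam * \<bar>s\<bar>) / lam / \<epsilon>)"
  proof (rule mult_mono)
    show "max (Hx (Uf w) s) (Hx (Uf v) s) \<le> C0 * exp (- \<bar>s\<bar>)"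
      using Hx_le[OF Uf_cont] by simp
    have "\<bar>Phi (Uf w) s / \<epsilon> - Phi (Uf v) s / \<epsilon>\<bar> = \<bar>prim (\<lambda>t. g (Uf w t)) s - prim (\<lambda>t. g (Uf v t)) s\<bar> / \<epsilon>"
      using e by (simp add: Phi_def diff_divide_distrib[symmetric])
    also have "\<dots> \<le> K * dist w v * exp (lam * \<bar>s\<bar>) / lam / \<epsilon>"
      using e by (intro divide_right_mono prim_g_diff) auto
    finally show "\<bar>Phi (Uf w) s / \<epsilon> - Phi (Uf v) s / \<epsilon>\<bar> \<le> K * dist w v * exp (lam * \<bar>s\<bar>) / lam / \<epsilon>" .
  qed (use C0_pos in auto)
  also have "\<dots> = C0 * K * dist w v / (\<epsilon> * lam) * (exp (- \<bar>s\<bar>) * exp (lam * \<bar>s\<bar>))"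
    by (simp add: field_simps)
  also have "exp (- \<bar>s\<bar>) * exp (lam * \<bar>s\<bar>) = exp ((lam - 1) * \<bar>s\<bar>)"
    by (simp add: mult_exp_exp algebra_simps)
  finally show ?thesis .
qed

lemma prim_Hx_diff:
  "\<bar>prim (Hx (Uf w)) x - prim (Hx (Uf v)) x\<bar> \<le> C0 * K * dist w v / (\<epsilon> * lam) * exp ((lam - 1) * \<bar>x\<bar>)"
proof -
  define c where "c = C0 * K * dist w v / (\<epsilon> * lam)"
  have c0: "c \<ge> 0" unfolding c_def using C0_pos K0 e lam_ge2 by simp
  have l1: "lam - 1 \<ge> 1" using lam_ge2 by simp
  have "\<bar>prim (Hx (Uf w)) x - prim (Hx (Uf v)) x\<bar> \<le> (\<lambda>t. c * (exp ((lam - 1) * t) - 1) / (lam - 1)) \<bar>x\<bar>"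
  proof (rule deriv_bound[where F' = "\<lambda>t. Hx (Uf w) t - Hx (Uf v) t" and q = "\<lambda>t. c * exp ((lam - 1) * t)"])
    show "((\<lambda>x. prim (Hx (Uf w)) x - prim (Hx (Uf v)) x) has_real_derivative Hx (Uf w) t - Hx (Uf v) t) (at t)" for t
      by (intro derivative_intros prim_deriv Hx_cont Uf_cont)
    show "((\<lambda>t. c * (exp ((lam - 1) * t) - 1) / (lam - 1)) has_real_derivative c * exp ((lam - 1) * t)) (at t)" for t
      using l1 by (auto intro!: derivative_eq_intros)
    show "\<bar>Hx (Uf w) t - Hx (Uf v) t\<bar> \<le> c * exp ((lam - 1) * \<bar>t\<bar>)" for t
      unfolding c_def by (rule Hx_diff)
  qed simp_all
  also have "\<dots> \<le> c * exp ((lam - 1) * \<bar>x\<bar>) / (lam - 1)"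
    using l1 c0 by (intro divide_right_mono mult_left_mono) auto
  also have "\<dots> \<le> c * exp ((lam - 1) * \<bar>x\<bar>)"
  proof -
    have "c * exp ((lam - 1) * \<bar>x\<bar>) * 1 \<le> c * exp ((lam - 1) * \<bar>x\<bar>) * (lam - 1)"
      using l1 c0 by (intro mult_left_mono) auto
    thus ?thesis using l1 by (simp add: divide_le_eq)
  qed
  finally show ?thesis unfolding c_def .
qed

lemma Tm_contr:
  assumes b: "\<bar>\<beta>\<bar> \<le> B"
  shows "dist (Tm \<alpha> \<beta> w) (Tm \<alpha> \<beta> v) \<le> 1/2 * dist w v"
proof (rule dist_bound)
  fix x
  define c where "c = C0 * K * dist w v / (\<epsilon> * lam)"
  have lp: "lam > 0" using lam_ge2 by simp
  have "dist (Tm \<alpha> \<beta> w x) (Tm \<alpha> \<beta> v x) = exp (- lam * \<bar>x\<bar>) * \<bar>\<beta>\<bar> * \<bar>prim (Hx (Uf w)) x - prim (Hx (Uf v)) x\<bar>"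
    by (simp add: Tm_apply Tf_def dist_real_def abs_mult right_diff_distrib[symmetric] mult.assoc)
  also have "\<dots> \<le> exp (- lam * \<bar>x\<bar>) * B * (c * exp ((lam - 1) * \<bar>x\<bar>))"
    unfolding c_def using b by (intro mult_mono prim_Hx_diff) auto
  also have "\<dots> = B * c * (exp (- lam * \<bar>x\<bar>) * exp ((lam - 1) * \<bar>x\<bar>))" by simp
  also have "exp (- lam * \<bar>x\<bar>) * exp ((lam - 1) * \<bar>x\<bar>) = exp (- \<bar>x\<bar>)"
    by (simp add: mult_exp_exp algebra_simps)
  also have "B * c * exp (- \<bar>x\<bar>) \<le> B * c * 1"
    using B0 C0_pos K0 e lp unfolding c_def by (intro mult_left_mono) auto
  also have "B * c * 1 = (B * C0 * K / \<epsilon>) / lam * dist w v" unfolding c_def by (simp add: field_simps)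
  also have "\<dots> \<le> 1/2 * dist w v"
  proof (rule mult_right_mono)
    have "lam / 2 = B * C0 * K / \<epsilon> + 1" unfolding lam_def by (simp add: add_divide_distrib)
    hence "B * C0 * K / \<epsilon> \<le> lam / 2" by linarith
    hence "(B * C0 * K / \<epsilon>) / lam \<le> (lam / 2) / lam" using lp by (intro divide_right_mono) auto
    thus "(B * C0 * K / \<epsilon>) / lam \<le> 1/2" using lp by simp
  qed simp
  finally show "dist (Tm \<alpha> \<beta> w x) (Tm \<alpha> \<beta> v x) \<le> 1/2 * dist w v" .
qed

definition wf where "wf \<alpha> \<beta> = (THE w. Tm \<alpha> \<beta> w = w)"
definition uf where "uf \<alpha> \<beta> = Uf (wf \<alpha> \<beta>)"

lemma wf_fix: assumes "\<bar>\<beta>\<bar> \<le> B" shows "Tm \<alpha> \<beta> (wf \<alpha> \<beta>) = wf \<alpha> \<beta>"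
  unfolding wf_def
  by (rule theI', rule banach_fix_type[of "1/2"]) (use Tm_contr[OF assms] in auto)

lemma uf_cont: "continuous_on UNIV (uf \<alpha> \<beta>)"
  unfolding uf_def by (rule Uf_cont)

lemma uf_eq:
  assumes "\<bar>\<beta>\<bar> \<le> B"
  shows "uf \<alpha> \<beta> x = \<alpha> + \<beta> * prim (Hx (uf \<alpha> \<beta>)) x"
proof -
  have "apply_bcontfun (wf \<alpha> \<beta>) x = Tf \<alpha> \<beta> (wf \<alpha> \<beta>) x"
    using arg_cong[OF wf_fix[OF assms, of \<alpha>], of "\<lambda>w. apply_bcontfun w x"] by (simp add: Tm_apply)
  hence "uf \<alpha> \<beta> x = exp (lam * \<bar>x\<bar>) * (exp (- lam * \<bar>x\<bar>) * (\<alpha> + \<beta> * prim (Hx (uf \<alpha> \<beta>)) x))"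
    by (simp add: uf_def Uf_def Tf_def)
  also have "\<dots> = (exp (lam * \<bar>x\<bar>) * exp (- lam * \<bar>x\<bar>)) * (\<alpha> + \<beta> * prim (Hx (uf \<alpha> \<beta>)) x)"
    by (simp only: mult.assoc)
  also have "exp (lam * \<bar>x\<bar>) * exp (- lam * \<bar>x\<bar>) = 1" by (simp add: mult_exp_exp)
  finally show ?thesis by simp
qed

lemma uf_deriv:
  assumes "\<bar>\<beta>\<bar> \<le> B"
  shows "(uf \<alpha> \<beta> has_real_derivative \<beta> * Hx (uf \<alpha> \<beta>) x) (at x)"
proof -
  have "uf \<alpha> \<beta> = (\<lambda>x. \<alpha> + \<beta> * prim (Hx (uf \<alpha> \<beta>)) x)" using uf_eq[OF assms] by auto
  moreover have "((\<lambda>x. \<alpha> + \<beta> * prim (Hx (uf \<alpha> \<beta>)) x) has_real_derivative \<beta> * Hx (uf \<alpha> \<beta>) x) (at x)"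
    by (auto intro!: derivative_eq_intros prim_deriv Hx_cont uf_cont)
  ultimately show ?thesis by simp
qed

lemma Tm_param: "dist (Tm \<alpha> \<beta> w) (Tm \<alpha>' \<beta>' w) \<le> \<bar>\<alpha> - \<alpha>'\<bar> + \<bar>\<beta> - \<beta>'\<bar> * C0"
proof (rule dist_bound)
  fix x
  have eq: "Tf \<alpha> \<beta> w x - Tf \<alpha>' \<beta>' w x = exp (- lam * \<bar>x\<bar>) * ((\<alpha> - \<alpha>') + (\<beta> - \<beta>') * prim (Hx (Uf w)) x)"
    by (simp add: Tf_def algebra_simps)
  have "dist (Tm \<alpha> \<beta> w x) (Tm \<alpha>' \<beta>' w x) = exp (- lam * \<bar>x\<bar>) * \<bar>(\<alpha> - \<alpha>') + (\<beta> - \<beta>') * prim (Hx (Uf w)) x\<bar>"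
    by (simp only: Tm_apply dist_real_def eq abs_mult) simp
  also have "\<dots> \<le> 1 * \<bar>(\<alpha> - \<alpha>') + (\<beta> - \<beta>') * prim (Hx (Uf w)) x\<bar>"
    using lam_ge2 by (intro mult_right_mono) auto
  also have "\<dots> \<le> \<bar>\<alpha> - \<alpha>'\<bar> + \<bar>\<beta> - \<beta>'\<bar> * \<bar>prim (Hx (Uf w)) x\<bar>"
    by (simp add: abs_mult[symmetric] abs_triangle_ineq)
  also have "\<dots> \<le> \<bar>\<alpha> - \<alpha>'\<bar> + \<bar>\<beta> - \<beta>'\<bar> * C0"
    using prim_Hx_bound[OF Uf_cont, of w x] by (simp add: mult_left_mono)
  finally show "dist (Tm \<alpha> \<beta> w x) (Tm \<alpha>' \<beta>' w x) \<le> \<bar>\<alpha> - \<alpha>'\<bar> + \<bar>\<beta> - \<beta>'\<bar> * C0" .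
qed

lemma wf_lip:
  assumes "\<bar>\<beta>\<bar> \<le> B" "\<bar>\<beta>'\<bar> \<le> B"
  shows "dist (wf \<alpha> \<beta>) (wf \<alpha>' \<beta>') \<le> 2 * (\<bar>\<alpha> - \<alpha>'\<bar> + \<bar>\<beta> - \<beta>'\<bar> * C0)"
proof -
  let ?x = "wf \<alpha> \<beta>" and ?y = "wf \<alpha>' \<beta>'"
  have "dist ?x ?y = dist (Tm \<alpha> \<beta> ?x) (Tm \<alpha>' \<beta>' ?y)"
    using wf_fix[OF assms(1)] wf_fix[OF assms(2)] by simp
  also have "\<dots> \<le> dist (Tm \<alpha> \<beta> ?x) (Tm \<alpha> \<beta> ?y) + dist (Tm \<alpha> \<beta> ?y) (Tm \<alpha>' \<beta>' ?y)"
    by (rule dist_triangle)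
  also have "\<dots> \<le> 1/2 * dist ?x ?y + (\<bar>\<alpha> - \<alpha>'\<bar> + \<bar>\<beta> - \<beta>'\<bar> * C0)"
    by (intro add_mono Tm_contr assms Tm_param)
  finally show ?thesis by simp
qed

lemma uf_lip:
  assumes "\<bar>\<beta>\<bar> \<le> B" "\<bar>\<beta>'\<bar> \<le> B"
  shows "\<bar>uf \<alpha> \<beta> x - uf \<alpha>' \<beta>' x\<bar> \<le> exp (lam * \<bar>x\<bar>) * (2 * (\<bar>\<alpha> - \<alpha>'\<bar> + \<bar>\<beta> - \<beta>'\<bar> * C0))"
  unfolding uf_def using Uf_diff[of "wf \<alpha> \<beta>" x "wf \<alpha>' \<beta>'"] wf_lip[OF assms, of \<alpha> \<alpha>']
  by (smt (verit) exp_gt_zero mult_left_mono)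

end


lemma cont_est:
  fixes F :: "'a::metric_space \<Rightarrow> real"
  assumes est: "\<And>p q x. p \<in> S \<Longrightarrow> q \<in> S \<Longrightarrow> x \<ge> 0 \<Longrightarrow>
      \<bar>F p - F q\<bar> \<le> A * exp (- x) + exp (l * x) * L * dist p q"
    and A: "A \<ge> 0" and L: "L \<ge> 0"
  shows "continuous_on S F"
  unfolding continuous_on_iff
proof (intro ballI allI impI)
  fix p and e :: real assume p: "p \<in> S" and e: "e > 0"
  define x0 where "x0 = max 0 (ln (4 * (A + 1) / e))"
  have x0: "x0 \<ge> 0" by (simp add: x0_def)
  have "exp x0 \<ge> 4 * (A + 1) / e"
  proof -
    have "exp (ln (4 * (A + 1) / e)) = 4 * (A + 1) / e" using A e by simp
    moreover have "ln (4 * (A + 1) / e) \<le> x0" by (simp add: x0_def)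
    ultimately show ?thesis by (metis exp_le_cancel_iff)
  qed
  hence "exp (- x0) \<le> e / (4 * (A + 1))"
    using A e by (simp add: exp_minus divide_simps mult.commute)
  hence "A * exp (- x0) \<le> A * (e / (4 * (A + 1)))" using A by (intro mult_left_mono) auto
  also have "\<dots> < e / 2" using A e by (simp add: field_simps) (auto intro!: add_pos_nonneg)
  finally have a1: "A * exp (- x0) < e / 2" .
  define E where "E = exp (l * x0) * L + 1"
  have "exp (l * x0) * L \<ge> 0" using L by simp
  hence E: "E > 0" by (simp add: E_def)
  show "\<exists>d>0. \<forall>q\<in>S. dist q p < d \<longrightarrow> dist (F q) (F p) < e"
  proof (intro exI[of _ "e / (2 * E)"] conjI ballI impI)
    show "e / (2 * E) > 0" using e E by simp
    fix q assume q: "q \<in> S" and d: "dist q p < e / (2 * E)"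
    have "exp (l * x0) * L * dist q p \<le> E * dist q p"
      unfolding E_def by (intro mult_right_mono) auto
    also have "\<dots> \<le> E * (e / (2 * E))" using d E by (intro mult_left_mono) auto
    also have "\<dots> = e / 2" using E by simp
    finally have a2: "exp (l * x0) * L * dist q p \<le> e / 2" .
    have "dist (F q) (F p) = \<bar>F q - F p\<bar>" by (simp add: dist_real_def)
    also have "\<dots> \<le> A * exp (- x0) + exp (l * x0) * L * dist q p" by (rule est[OF q p x0])
    also have "\<dots> < e" using a1 a2 by linarith
    finally show "dist (F q) (F p) < e" .
  qed
qed

context dx begin

definition Lp where "Lp \<alpha> \<beta> = Sup (range (uf \<alpha> \<beta>))"
definition Lm where "Lm \<alpha> \<beta> = Inf (range (uf \<alpha> \<beta>))"
definition c1 where "c1 = exp (- (M + 1) / \<epsilon>)"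

lemma c1_pos: "c1 > 0" by (simp add: c1_def)
lemma c1_le: "c1 \<le> C0"
proof -
  have "- (M + 1) / \<epsilon> \<le> 0" using M0 e by (simp add: divide_nonpos_pos)
  hence "c1 \<le> 1" by (simp add: c1_def)
  thus ?thesis using C0_ge1 by simp
qed

context
  fixes \<alpha> \<beta> :: real assumes b: "0 < \<beta>" "\<beta> \<le> B"
begin

lemma bB: "\<bar>\<beta>\<bar> \<le> B" using b by simp

lemma ufd: "(uf \<alpha> \<beta> has_real_derivative \<beta> * Hx (uf \<alpha> \<beta>) x) (at x)"
  by (rule uf_deriv[OF bB])

lemma uf_0: "uf \<alpha> \<beta> 0 = \<alpha>" using uf_eq[OF bB, of \<alpha> 0] by simp

lemma uf_mono: "mono (uf \<alpha> \<beta>)"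
proof (rule monoI)
  fix x y :: real assume "x \<le> y"
  then show "uf \<alpha> \<beta> x \<le> uf \<alpha> \<beta> y"
    by (rule DERIV_nonneg_imp_nondecreasing)
       (use ufd b Hx_pos in \<open>auto intro!: exI[of _ "\<beta> * Hx (uf \<alpha> \<beta>) _"] simp: less_imp_le\<close>)
qed

lemma uf_lower:
  assumes "-1 \<le> x" "x \<le> y" "y \<le> 1"
  shows "uf \<alpha> \<beta> y - uf \<alpha> \<beta> x \<ge> \<beta> * c1 * (y - x)"
proof -
  have "uf \<alpha> \<beta> x - \<beta> * c1 * x \<le> uf \<alpha> \<beta> y - \<beta> * c1 * y"
  proof (rule DERIV_nonneg_imp_nondecreasing[OF assms(2)])
    fix t assume t: "x \<le> t" "t \<le> y"
    have "c1 \<le> Hx (uf \<alpha> \<beta>) t" unfolding c1_def using t assms by (intro Hx_ge uf_cont) auto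
    hence "\<beta> * c1 \<le> \<beta> * Hx (uf \<alpha> \<beta>) t" using b by simp
    thus "\<exists>d. ((\<lambda>t. uf \<alpha> \<beta> t - \<beta> * c1 * t) has_real_derivative d) (at t) \<and> 0 \<le> d"
      by (intro exI[of _ "\<beta> * Hx (uf \<alpha> \<beta>) t - \<beta> * c1"]) (auto intro!: derivative_eq_intros ufd)
  qed
  thus ?thesis by (simp add: algebra_simps)
qed

lemma uf_bound: "\<bar>uf \<alpha> \<beta> x - \<alpha>\<bar> \<le> \<beta> * C0"
  using uf_eq[OF bB, of \<alpha> x] prim_Hx_bound[OF uf_cont, of \<alpha> \<beta> x] b
  by (simp add: abs_mult mult_left_mono)

lemma uf_tailR:
  assumes "0 \<le> x" "x \<le> y"
  shows "uf \<alpha> \<beta> y \<le> uf \<alpha> \<beta> x + \<beta> * C0 * exp (- x)"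
proof -
  have "uf \<alpha> \<beta> y + \<beta> * C0 * exp (- y) \<le> uf \<alpha> \<beta> x + \<beta> * C0 * exp (- x)"
  proof (rule DERIV_nonpos_imp_nonincreasing[OF assms(2)])
    fix t assume t: "x \<le> t" "t \<le> y"
    have "Hx (uf \<alpha> \<beta>) t \<le> C0 * exp (- t)" using Hx_le[OF uf_cont, of \<alpha> \<beta> t] t assms by simp
    hence "\<beta> * Hx (uf \<alpha> \<beta>) t \<le> \<beta> * (C0 * exp (- t))" using b by simp
    thus "\<exists>d. ((\<lambda>t. uf \<alpha> \<beta> t + \<beta> * C0 * exp (- t)) has_real_derivative d) (at t) \<and> d \<le> 0"
      by (intro exI[of _ "\<beta> * Hx (uf \<alpha> \<beta>) t - \<beta> * C0 * exp (- t)"]) (auto intro!: derivative_eq_intros ufd)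
  qed
  moreover have "\<beta> * C0 * exp (- y) \<ge> 0" using b C0_pos by simp
  ultimately show ?thesis by linarith
qed

lemma uf_tailL:
  assumes "y \<le> x" "x \<le> 0"
  shows "uf \<alpha> \<beta> x - \<beta> * C0 * exp x \<le> uf \<alpha> \<beta> y"
proof -
  have "uf \<alpha> \<beta> x - \<beta> * C0 * exp x \<le> uf \<alpha> \<beta> y - \<beta> * C0 * exp y"
  proof (rule DERIV_nonpos_imp_nonincreasing[OF assms(1)])
    fix t assume t: "y \<le> t" "t \<le> x"
    have "Hx (uf \<alpha> \<beta>) t \<le> C0 * exp t" using Hx_le[OF uf_cont, of \<alpha> \<beta> t] t assms by simp
    hence "\<beta> * Hx (uf \<alpha> \<beta>) t \<le> \<beta> * (C0 * exp t)" using b by simp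
    thus "\<exists>d. ((\<lambda>t. uf \<alpha> \<beta> t - \<beta> * C0 * exp t) has_real_derivative d) (at t) \<and> d \<le> 0"
      by (intro exI[of _ "\<beta> * Hx (uf \<alpha> \<beta>) t - \<beta> * C0 * exp t"]) (auto intro!: derivative_eq_intros ufd)
  qed
  moreover have "\<beta> * C0 * exp y \<ge> 0" using b C0_pos by simp
  ultimately show ?thesis by linarith
qed

lemma uf_ub: "uf \<alpha> \<beta> x \<le> \<alpha> + \<beta> * C0" using uf_bound[of x] by (simp add: abs_le_iff)
lemma uf_lb: "\<alpha> - \<beta> * C0 \<le> uf \<alpha> \<beta> x" using uf_bound[of x] by (simp add: abs_le_iff)

lemma bdd_a: "bdd_above (range (uf \<alpha> \<beta>))"
  using uf_ub by (intro bdd_aboveI[of _ "\<alpha> + \<beta> * C0"]) auto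

lemma bdd_b: "bdd_below (range (uf \<alpha> \<beta>))"
  using uf_lb by (intro bdd_belowI[of _ "\<alpha> - \<beta> * C0"]) auto

lemma Lp_tendsto: "(uf \<alpha> \<beta> \<longlongrightarrow> Lp \<alpha> \<beta>) at_top"
  unfolding Lp_def by (rule mono_tendsto_Sup[OF uf_mono bdd_a])

lemma Lm_tendsto: "(uf \<alpha> \<beta> \<longlongrightarrow> Lm \<alpha> \<beta>) at_bot"
  unfolding Lm_def by (rule mono_tendsto_Inf[OF uf_mono bdd_b])

lemma uf_le_Lp: "uf \<alpha> \<beta> x \<le> Lp \<alpha> \<beta>"
  unfolding Lp_def using bdd_a by (intro cSup_upper) auto

lemma Lm_le_uf: "Lm \<alpha> \<beta> \<le> uf \<alpha> \<beta> x"
  unfolding Lm_def using bdd_b by (intro cInf_lower) auto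

lemma Lp_tail: "0 \<le> x \<Longrightarrow> Lp \<alpha> \<beta> \<le> uf \<alpha> \<beta> x + \<beta> * C0 * exp (- x)"
  unfolding Lp_def
proof (rule cSup_least)
  assume x: "0 \<le> x"
  fix z assume "z \<in> range (uf \<alpha> \<beta>)"
  then obtain y where z: "z = uf \<alpha> \<beta> y" by auto
  show "z \<le> uf \<alpha> \<beta> x + \<beta> * C0 * exp (- x)"
  proof (cases "x \<le> y")
    case True then show ?thesis using uf_tailR[OF x True] z by simp
  next
    case False
    hence "uf \<alpha> \<beta> y \<le> uf \<alpha> \<beta> x" using uf_mono by (simp add: monoD)
    moreover have "\<beta> * C0 * exp (- x) \<ge> 0" using b C0_pos by simp
    ultimately show ?thesis using z by simp
  qed
qed auto

lemma Lm_tail: "x \<le> 0 \<Longrightarrow> uf \<alpha> \<beta> x - \<beta> * C0 * exp x \<le> Lm \<alpha> \<beta>"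
  unfolding Lm_def
proof (rule cInf_greatest)
  assume x: "x \<le> 0"
  fix z assume "z \<in> range (uf \<alpha> \<beta>)"
  then obtain y where z: "z = uf \<alpha> \<beta> y" by auto
  show "uf \<alpha> \<beta> x - \<beta> * C0 * exp x \<le> z"
  proof (cases "y \<le> x")
    case True then show ?thesis using uf_tailL[OF True x] z by simp
  next
    case False
    hence "uf \<alpha> \<beta> x \<le> uf \<alpha> \<beta> y" using uf_mono by (simp add: monoD)
    moreover have "\<beta> * C0 * exp x \<ge> 0" using b C0_pos by simp
    ultimately show ?thesis using z by simp
  qed
qed auto

lemma Lp_le: "Lp \<alpha> \<beta> \<le> \<alpha> + \<beta> * C0"
  unfolding Lp_def using uf_ub by (intro cSup_least) auto

lemma Lm_ge: "\<alpha> - \<beta> * C0 \<le> Lm \<alpha> \<beta>"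
  unfolding Lm_def using uf_lb by (intro cInf_greatest) auto

lemma L_gap: "2 * \<beta> * c1 \<le> Lp \<alpha> \<beta> - Lm \<alpha> \<beta>"
  using uf_lower[of "-1" 1] uf_le_Lp[of 1] Lm_le_uf[of "-1"] by simp

lemma Lm_lt: "Lm \<alpha> \<beta> < \<alpha>"
proof -
  have "\<beta> * c1 * (0 - (-1)) \<le> uf \<alpha> \<beta> 0 - uf \<alpha> \<beta> (-1)" by (rule uf_lower) auto
  moreover have "\<beta> * c1 > 0" using b c1_pos by simp
  ultimately show ?thesis using Lm_le_uf[of "-1"] uf_0 by simp
qed

lemma Lp_gt: "\<alpha> < Lp \<alpha> \<beta>"
proof -
  have "\<beta> * c1 * (1 - 0) \<le> uf \<alpha> \<beta> 1 - uf \<alpha> \<beta> 0" by (rule uf_lower) auto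
  moreover have "\<beta> * c1 > 0" using b c1_pos by simp
  ultimately show ?thesis using uf_le_Lp[of 1] uf_0 by simp
qed

end

end


context dx begin

lemma uf_diff_pq:
  assumes p: "0 < snd p" "snd p \<le> B" and q: "0 < snd q" "snd q \<le> B"
  shows "\<bar>uf (fst p) (snd p) x - uf (fst q) (snd q) x\<bar> \<le> exp (lam * \<bar>x\<bar>) * (2 * (1 + C0)) * dist p q"
proof -
  have "\<bar>uf (fst p) (snd p) x - uf (fst q) (snd q) x\<bar>
      \<le> exp (lam * \<bar>x\<bar>) * (2 * (\<bar>fst p - fst q\<bar> + \<bar>snd p - snd q\<bar> * C0))"
    by (rule uf_lip) (use p q in auto)
  also have "\<dots> \<le> exp (lam * \<bar>x\<bar>) * (2 * (dist p q + dist p q * C0))"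
  proof -
    have "\<bar>fst p - fst q\<bar> \<le> dist p q" using dist_fst_le[of p q] by (simp add: dist_real_def)
    moreover have "\<bar>snd p - snd q\<bar> \<le> dist p q" using dist_snd_le[of p q] by (simp add: dist_real_def)
    ultimately show ?thesis using C0_pos
      by (intro mult_left_mono add_mono) (auto intro: mult_right_mono)
  qed
  also have "\<dots> = exp (lam * \<bar>x\<bar>) * (2 * (1 + C0)) * dist p q" by (simp add: algebra_simps)
  finally show ?thesis .
qed

lemma Lp_cont:
  assumes S: "\<And>p. p \<in> S \<Longrightarrow> 0 < snd p \<and> snd p \<le> B"
  shows "continuous_on S (\<lambda>p. Lp (fst p) (snd p))"
proof (rule cont_est[where A = "2 * B * C0" and L = "2 * (1 + C0)" and l = lam])
  fix p q :: "real \<times> real" and x :: real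
  assume p: "p \<in> S" and q: "q \<in> S" and x: "0 \<le> x"
  have bp: "0 < snd p" "snd p \<le> B" and bq: "0 < snd q" "snd q \<le> B" using S[OF p] S[OF q] by auto
  have e1: "\<bar>Lp (fst p) (snd p) - uf (fst p) (snd p) x\<bar> \<le> B * C0 * exp (- x)"
    using Lp_tail[OF bp x, of "fst p"] uf_le_Lp[OF bp, of "fst p" x] bp C0_pos
    by (smt (verit) exp_gt_zero mult_right_mono)
  have e2: "\<bar>Lp (fst q) (snd q) - uf (fst q) (snd q) x\<bar> \<le> B * C0 * exp (- x)"
    using Lp_tail[OF bq x, of "fst q"] uf_le_Lp[OF bq, of "fst q" x] bq C0_pos
    by (smt (verit) exp_gt_zero mult_right_mono)
  have e3: "\<bar>uf (fst p) (snd p) x - uf (fst q) (snd q) x\<bar> \<le> exp (lam * x) * (2 * (1 + C0)) * dist p q"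
    using uf_diff_pq[OF bp bq, of x] x by simp
  show "\<bar>Lp (fst p) (snd p) - Lp (fst q) (snd q)\<bar> \<le> 2 * B * C0 * exp (- x) + exp (lam * x) * (2 * (1 + C0)) * dist p q"
    using e1 e2 e3 by linarith
qed (use B0 C0_pos in auto)

lemma Lm_cont:
  assumes S: "\<And>p. p \<in> S \<Longrightarrow> 0 < snd p \<and> snd p \<le> B"
  shows "continuous_on S (\<lambda>p. Lm (fst p) (snd p))"
proof (rule cont_est[where A = "2 * B * C0" and L = "2 * (1 + C0)" and l = lam])
  fix p q :: "real \<times> real" and x :: real
  assume p: "p \<in> S" and q: "q \<in> S" and x: "0 \<le> x"
  have x': "- x \<le> 0" using x by simp
  have bp: "0 < snd p" "snd p \<le> B" and bq: "0 < snd q" "snd q \<le> B" using S[OF p] S[OF q] by auto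
  have e1: "\<bar>Lm (fst p) (snd p) - uf (fst p) (snd p) (- x)\<bar> \<le> B * C0 * exp (- x)"
    using Lm_tail[OF bp x', of "fst p"] Lm_le_uf[OF bp, of "fst p" "- x"] bp C0_pos
    by (smt (verit) exp_gt_zero mult_right_mono)
  have e2: "\<bar>Lm (fst q) (snd q) - uf (fst q) (snd q) (- x)\<bar> \<le> B * C0 * exp (- x)"
    using Lm_tail[OF bq x', of "fst q"] Lm_le_uf[OF bq, of "fst q" "- x"] bq C0_pos
    by (smt (verit) exp_gt_zero mult_right_mono)
  have e3: "\<bar>uf (fst p) (snd p) (- x) - uf (fst q) (snd q) (- x)\<bar> \<le> exp (lam * x) * (2 * (1 + C0)) * dist p q"
    using uf_diff_pq[OF bp bq, of "- x"] x by simp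
  show "\<bar>Lm (fst p) (snd p) - Lm (fst q) (snd q)\<bar> \<le> 2 * B * C0 * exp (- x) + exp (lam * x) * (2 * (1 + C0)) * dist p q"
    using e1 e2 e3 by linarith
qed (use B0 C0_pos in auto)

end


context dx begin

lemma exists_params:
  assumes ab: "a < b" and BB: "B = (b - a) / (2 * c1)"
  shows "\<exists>\<alpha> \<beta>. 0 < \<beta> \<and> \<beta> \<le> B \<and> Lm \<alpha> \<beta> = a \<and> Lp \<alpha> \<beta> = b"
proof -
  define b1 where "b1 = (b - a) / (2 * C0)"
  have b1: "0 < b1" using ab C0_pos by (simp add: b1_def)
  have b1B: "b1 \<le> B" unfolding b1_def BB using ab c1_pos c1_le
    by (intro divide_left_mono) auto
  define S where "S = {a..b} \<times> {b1..B}"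
  have Sb: "\<And>p. p \<in> S \<Longrightarrow> 0 < snd p \<and> snd p \<le> B" using b1 by (auto simp: S_def)
  define D where "D p = Lp (fst p) (snd p) - Lm (fst p) (snd p)" for p
  define G where "G p = (a + (b - a) * (fst p - Lm (fst p) (snd p)) / D p, (b - a) * snd p / D p)" for p
  have Dpos: "D p > 0" if "p \<in> S" for p
    using Lm_lt[of "snd p" "fst p"] Lp_gt[of "snd p" "fst p"] Sb[OF that] by (simp add: D_def)
  have cD: "continuous_on S D" unfolding D_def[abs_def]
    by (intro continuous_intros Lp_cont Lm_cont Sb)
  have Dne: "\<forall>p\<in>S. D p \<noteq> 0" using Dpos by force
  have cG: "continuous_on S G" unfolding G_def[abs_def]
    using Dne by (intro continuous_intros cD Lm_cont Sb) auto
  have GS: "G \<in> S \<rightarrow> S"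
  proof
    fix p assume p: "p \<in> S"
    obtain \<alpha> \<beta> where pe: "p = (\<alpha>, \<beta>)" by (cases p)
    have bb: "0 < \<beta>" "\<beta> \<le> B" using Sb[OF p] pe by auto
    have D1: "2 * \<beta> * c1 \<le> D p" using L_gap[OF bb] pe by (simp add: D_def)
    have D2: "D p \<le> 2 * \<beta> * C0" using Lp_le[OF bb, of \<alpha>] Lm_ge[OF bb, of \<alpha>] pe by (simp add: D_def)
    have Dp: "D p > 0" using Dpos[OF p] .
    have l1: "Lm \<alpha> \<beta> < \<alpha>" and l2: "\<alpha> < Lp \<alpha> \<beta>" using Lm_lt[OF bb] Lp_gt[OF bb] by auto
    have r0: "0 \<le> (\<alpha> - Lm \<alpha> \<beta>) / D p" using l1 Dp by simp
    have r1: "(\<alpha> - Lm \<alpha> \<beta>) / D p \<le> 1" using l2 Dp by (simp add: D_def pe)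
    have "a + (b - a) * (\<alpha> - Lm \<alpha> \<beta>) / D p \<in> {a..b}"
    proof -
      have "0 \<le> (b - a) * ((\<alpha> - Lm \<alpha> \<beta>) / D p)" using ab r0 by (intro mult_nonneg_nonneg) auto
      moreover have "(b - a) * ((\<alpha> - Lm \<alpha> \<beta>) / D p) \<le> (b - a) * 1" using ab r1 by (intro mult_left_mono) auto
      ultimately show ?thesis by simp
    qed
    moreover have "(b - a) * \<beta> / D p \<in> {b1..B}"
    proof -
      have "b1 = (b - a) * \<beta> / (2 * \<beta> * C0)" using bb by (simp add: b1_def)
      also have "\<dots> \<le> (b - a) * \<beta> / D p" using D2 Dp ab bb by (intro divide_left_mono) auto
      finally have i1: "b1 \<le> (b - a) * \<beta> / D p" .
      have "(b - a) * \<beta> / D p \<le> (b - a) * \<beta> / (2 * \<beta> * c1)"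
        using D1 ab bb c1_pos Dp by (intro divide_left_mono) auto
      also have "\<dots> = B" using bb BB by simp
      finally show ?thesis using i1 by simp
    qed
    ultimately show "G p \<in> S" by (simp add: G_def S_def pe)
  qed
  have "compact S" unfolding S_def by (intro compact_Times compact_Icc)
  moreover have "convex S" unfolding S_def by (intro convex_Times) auto
  moreover have "S \<noteq> {}" using ab b1B by (auto simp: S_def)
  ultimately obtain p where p: "p \<in> S" "G p = p" using brouwer[OF _ _ _ cG GS] by blast
  obtain \<alpha> \<beta> where pe: "p = (\<alpha>, \<beta>)" by (cases p)
  have bb: "0 < \<beta>" "\<beta> \<le> B" using Sb[OF p(1)] pe by auto
  have Dp: "D p > 0" using Dpos[OF p(1)] .
  have "(b - a) * \<beta> / D p = \<beta>" using p(2) pe by (simp add: G_def)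
  hence "(b - a) * \<beta> = \<beta> * D p" using Dp by (simp add: divide_eq_eq)
  hence "\<beta> * (b - a) = \<beta> * D p" by (simp add: mult.commute)
  hence "D p = b - a" using bb by simp
  moreover have "a + (b - a) * (\<alpha> - Lm \<alpha> \<beta>) / D p = \<alpha>" using p(2) pe by (simp add: G_def)
  ultimately have "a + (b - a) * (\<alpha> - Lm \<alpha> \<beta>) / (b - a) = \<alpha>" by simp
  hence "Lm \<alpha> \<beta> = a" using ab by simp
  moreover have "Lp \<alpha> \<beta> = b" using \<open>D p = b - a\<close> \<open>Lm \<alpha> \<beta> = a\<close> pe by (simp add: D_def)
  ultimately show ?thesis using bb \<open>Lm \<alpha> \<beta> = a\<close> by blast
qed

end


context dx begin

lemma sol_props:
  assumes b: "0 < \<beta>" "\<beta> \<le> B"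
  shows "C2_real (uf \<alpha> \<beta>)"
    and "\<And>x. \<epsilon> * deriv (deriv (uf \<alpha> \<beta>)) x = (g (uf \<alpha> \<beta> x) - x) * deriv (uf \<alpha> \<beta>) x"
proof -
  let ?u = "uf \<alpha> \<beta>"
  have bB: "\<bar>\<beta>\<bar> \<le> B" using b by simp
  have d1: "deriv ?u = (\<lambda>x. \<beta> * Hx ?u x)"
    using uf_deriv[OF bB] by (auto intro!: DERIV_imp_deriv)
  have dd: "((\<lambda>x. \<beta> * Hx ?u x) has_real_derivative \<beta> * (Hx ?u x * ((g (?u x) - x) / \<epsilon>))) (at x)" for x
    by (rule DERIV_cmult[OF Hx_deriv[OF uf_cont]])
  have d2: "deriv (deriv ?u) = (\<lambda>x. \<beta> * (Hx ?u x * ((g (?u x) - x) / \<epsilon>)))"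
    unfolding d1 using dd by (auto intro!: DERIV_imp_deriv)
  show "C2_real ?u"
    unfolding C2_real_def
  proof (intro conjI allI)
    show "?u differentiable at x" for x using uf_deriv[OF bB] real_differentiable_def by blast
    show "deriv ?u differentiable at x" for x unfolding d1 using dd real_differentiable_def by blast
    show "continuous_on UNIV (deriv (deriv ?u))" unfolding d2
      by (intro continuous_intros Hx_cont uf_cont gu_cont) (use e in auto)
  qed
  show "\<epsilon> * deriv (deriv ?u) x = (g (?u x) - x) * deriv ?u x" for x
  proof -
    have A: "deriv (deriv ?u) x = \<beta> * (Hx ?u x * ((g (?u x) - x) / \<epsilon>))" by (simp only: d2)
    have Bq: "deriv ?u x = \<beta> * Hx ?u x" by (simp only: d1)
    show ?thesis unfolding A unfolding Bq using e by (simp add: field_simps)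
  qed
qed

end


lemma exists_inc:
  assumes f: "C1_real f" and e: "\<epsilon> > 0" and ab: "uL < uR"
    and L: "L-lipschitz_on {uL..uR} (deriv f)"
  shows "\<exists>u. sol f \<epsilon> uL uR u"
proof -
  note fD = C1_D[OF f]
  define cl where "cl v = max uL (min uR v)" for v
  define g where "g v = deriv f (cl v)" for v
  have cl_in: "cl v \<in> {uL..uR}" for v using ab by (auto simp: cl_def)
  have cl_lip: "\<bar>cl x - cl y\<bar> \<le> \<bar>x - y\<bar>" for x y by (auto simp: cl_def)
  have "bounded (deriv f ` {uL..uR})"
    by (intro compact_imp_bounded compact_continuous_image continuous_on_subset[OF fD(2)]) auto
  then obtain M where M: "\<And>v. v \<in> {uL..uR} \<Longrightarrow> \<bar>deriv f v\<bar> \<le> M"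
    unfolding bounded_iff by (auto simp del: atLeastAtMost_iff)
  have L0: "L \<ge> 0" using L by (simp add: lipschitz_on_def)
  have gc: "continuous_on UNIV g" unfolding g_def cl_def
    by (rule continuous_on_compose2[OF fD(2)]) (auto intro!: continuous_intros)
  have gM: "\<bar>g x\<bar> \<le> M" for x unfolding g_def using M cl_in by blast
  have gK: "\<bar>g x - g y\<bar> \<le> L * \<bar>x - y\<bar>" for x y
  proof -
    have "\<bar>g x - g y\<bar> \<le> L * \<bar>cl x - cl y\<bar>"
      using L cl_in[of x] cl_in[of y] unfolding lipschitz_on_def g_def dist_real_def by blast
    also have "\<dots> \<le> L * \<bar>x - y\<bar>" using L0 cl_lip by (intro mult_left_mono) auto
    finally show ?thesis .
  qed
  define B where "B = (uR - uL) / (2 * exp (- (M + 1) / \<epsilon>))"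
  have B0: "B > 0" using ab by (simp add: B_def)
  interpret dx g M L \<epsilon> B
    by unfold_locales (use gc gM gK L0 e B0 in auto)
  obtain \<alpha> \<beta> where p: "0 < \<beta>" "\<beta> \<le> B" "Lm \<alpha> \<beta> = uL" "Lp \<alpha> \<beta> = uR"
    using exists_params[OF ab] by (auto simp: B_def c1_def)
  let ?u = "uf \<alpha> \<beta>"
  have ode: "\<epsilon> * deriv (deriv ?u) x = (deriv f (?u x) - x) * deriv ?u x" for x
  proof -
    have "uL \<le> ?u x" "?u x \<le> uR" using Lm_le_uf[OF p(1,2)] uf_le_Lp[OF p(1,2)] p(3,4) by auto
    hence "g (?u x) = deriv f (?u x)" by (simp add: g_def cl_def)
    thus ?thesis using sol_props(2)[OF p(1,2), of \<alpha> x] by simp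
  qed
  have "sol f \<epsilon> uL uR ?u"
    unfolding sol_def using sol_props(1)[OF p(1,2)] ode Lm_tendsto[OF p(1,2)] Lp_tendsto[OF p(1,2)] p(3,4)
    by auto
  thus ?thesis by blast
qed

lemma reflect_sol:
  assumes f: "C1_real f" and s: "sol (\<lambda>v. - f (- v)) \<epsilon> (- uL) (- uR) u"
  shows "sol f \<epsilon> uL uR (\<lambda>x. - u x)"
proof -
  note fD = C1_D[OF f]
  have df: "deriv (\<lambda>v. - f (- v)) v = deriv f (- v)" for v
  proof (rule DERIV_imp_deriv)
    have "((\<lambda>v. f (- v)) has_real_derivative deriv f (- v) * (- 1)) (at v)"
      by (rule DERIV_chain2[OF fD(1)]) (auto intro!: derivative_eq_intros)
    thus "((\<lambda>v. - f (- v)) has_real_derivative deriv f (- v)) (at v)"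
      using DERIV_minus by fastforce
  qed
  note a = sol_D[OF s]
  have d1: "deriv (\<lambda>x. - u x) = (\<lambda>x. - deriv u x)"
    using a(1) by (auto intro!: DERIV_imp_deriv derivative_eq_intros)
  have d2: "deriv (\<lambda>x. - deriv u x) = (\<lambda>x. - deriv (deriv u) x)"
    using a(2) by (auto intro!: DERIV_imp_deriv derivative_eq_intros)
  have C2: "C2_real u" using s by (simp add: sol_def)
  have "C2_real (\<lambda>x. - u x)"
    unfolding C2_real_def d1 d2
  proof (intro conjI allI)
    show "(\<lambda>x. - u x) differentiable at x" for x
      using a(1) by (auto simp: real_differentiable_def intro!: derivative_eq_intros)
    show "(\<lambda>x. - deriv u x) differentiable at x" for x
      using a(2) by (auto simp: real_differentiable_def intro!: derivative_eq_intros)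
    show "continuous_on UNIV (\<lambda>x. - deriv (deriv u) x)"
      using C2 unfolding C2_real_def by (auto intro: continuous_intros)
  qed
  moreover have "\<epsilon> * deriv (deriv (\<lambda>x. - u x)) x = (deriv f (- u x) - x) * deriv (\<lambda>x. - u x) x" for x
    unfolding d1 d2 using a(3)[of x] df[of "u x"] by simp
  moreover have "((\<lambda>x. - u x) \<longlongrightarrow> uL) at_bot" using tendsto_minus[OF a(4)] by simp
  moreover have "((\<lambda>x. - u x) \<longlongrightarrow> uR) at_top" using tendsto_minus[OF a(5)] by simp
  ultimately show ?thesis unfolding sol_def by simp
qed

lemma reflect_C1:
  assumes f: "C1_real f"
  shows "C1_real (\<lambda>v. - f (- v))" and "\<And>v. deriv (\<lambda>v. - f (- v)) v = deriv f (- v)"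
proof -
  note fD = C1_D[OF f]
  have dd: "((\<lambda>v. - f (- v)) has_real_derivative deriv f (- v)) (at v)" for v
  proof -
    have "((\<lambda>v. f (- v)) has_real_derivative deriv f (- v) * (- 1)) (at v)"
      by (rule DERIV_chain2[OF fD(1)]) (auto intro!: derivative_eq_intros)
    thus ?thesis using DERIV_minus by fastforce
  qed
  show df: "deriv (\<lambda>v. - f (- v)) v = deriv f (- v)" for v by (rule DERIV_imp_deriv[OF dd])
  show "C1_real (\<lambda>v. - f (- v))"
    unfolding C1_real_def df
  proof (intro conjI allI)
    show "(\<lambda>v. - f (- v)) differentiable at x" for x using dd real_differentiable_def by blast
    show "continuous_on UNIV (\<lambda>x. deriv f (- x))"
      by (rule continuous_on_compose2[OF fD(2)]) (auto intro!: continuous_intros)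
  qed
qed

lemma exists_sol:
  assumes f: "C1_real f" and e: "\<epsilon> > 0"
    and L: "uL \<noteq> uR \<Longrightarrow> (\<exists>L. L-lipschitz_on {min uL uR..max uL uR} (deriv f))"
  shows "\<exists>u. sol f \<epsilon> uL uR u"
proof (cases uL uR rule: linorder_cases)
  case less
  then obtain K where "K-lipschitz_on {uL..uR} (deriv f)" using L by auto
  then show ?thesis using exists_inc[OF f e less] by blast
next
  case equal
  have "sol f \<epsilon> uL uR (\<lambda>x. uL)"
    unfolding sol_def C2_real_def using equal by simp
  then show ?thesis by blast
next
  case greater
  then obtain K where K: "K-lipschitz_on {uR..uL} (deriv f)" using L by auto
  have lip: "K-lipschitz_on {- uL..- uR} (deriv (\<lambda>v. - f (- v)))"
    unfolding lipschitz_on_def reflect_C1(2)[OF f]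
  proof (intro conjI ballI)
    show "0 \<le> K" using K by (simp add: lipschitz_on_def)
    fix x y assume "x \<in> {- uL..- uR}" "y \<in> {- uL..- uR}"
    hence "- x \<in> {uR..uL}" "- y \<in> {uR..uL}" by auto
    hence "dist (deriv f (- x)) (deriv f (- y)) \<le> K * dist (- x) (- y)"
      using K by (simp add: lipschitz_on_def)
    thus "dist (deriv f (- x)) (deriv f (- y)) \<le> K * dist x y" by (simp add: dist_real_def abs_minus_commute)
  qed
  moreover have "- uL < - uR" using greater by simp
  ultimately obtain u where "sol (\<lambda>v. - f (- v)) \<epsilon> (- uL) (- uR) u"
    using exists_inc[OF reflect_C1(1)[OF f] e] by blast
  then show ?thesis using reflect_sol[OF f] by blast
qed

theorem theorem1p1:
  fixes f :: "real \<Rightarrow> real" and uL uR \<epsilon> :: real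
  assumes "C1_real f"
    and "\<epsilon> > 0"
    and "uL \<noteq> uR \<Longrightarrow> (\<exists>L. L-lipschitz_on {min uL uR..max uL uR} (deriv f))"
  shows "\<exists>!u. C2_real u
     \<and> (\<forall>\<xi>. \<epsilon> * deriv (deriv u) \<xi> = (deriv f (u \<xi>) - \<xi>) * deriv u \<xi>)
     \<and> (u \<longlongrightarrow> uL) at_bot \<and> (u \<longlongrightarrow> uR) at_top"
proof -
  obtain u where u: "sol f \<epsilon> uL uR u" using exists_sol[OF assms] by blast
  show ?thesis
  proof (rule ex1I[of _ u])
    show "C2_real u \<and> (\<forall>\<xi>. \<epsilon> * deriv (deriv u) \<xi> = (deriv f (u \<xi>) - \<xi>) * deriv u \<xi>)
       \<and> (u \<longlongrightarrow> uL) at_bot \<and> (u \<longlongrightarrow> uR) at_top" using u by (simp add: sol_def)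
    fix v assume "C2_real v \<and> (\<forall>\<xi>. \<epsilon> * deriv (deriv v) \<xi> = (deriv f (v \<xi>) - \<xi>) * deriv v \<xi>)
       \<and> (v \<longlongrightarrow> uL) at_bot \<and> (v \<longlongrightarrow> uR) at_top"
    hence "sol f \<epsilon> uL uR v" by (simp add: sol_def)
    thus "v = u" using sol_unique[OF assms(1,2) _ u] by blast
  qed
qed


end
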